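(* There exist a constant $c>0$ and infinitely many values of $n$ such that for each such $n$ there is a tabletop rearrangement instance with $n$ uniform cylinders (congruent disc footprints) whose unlabeled $\mathrm{MRB}$ is at least $c\sqrt{n}$, and whose labeled $\mathrm{MRB}$ (for any assignment of labels to the start and goal poses) is at least $c\sqrt{n}$. That is, for both the labeled and unlabeled problems with $n$ uniform cylinders, $\mathrm{MRB}$ is lower bounded by $\Omega(\sqrt{n})$ in the worst case.
   Context: A tabletop rearrangement instance consists of $n$ objects in a bounded planar workspace, with a feasible start arrangement and a feasible goal arrangement (poses in $SE(2)$; feasible means no two placed footprints have intersecting interiors). In the labeled setting each object $o_i$ must end at its own goal pose $x_i^g$; in the unlabeled setting the (congruent) objects are interchangeable and must end occupying all goal poses. A plan with external buffers: each object is picked from its start pose exactly once and either placed at a goal pose (its own goal in the labeled case, any unoccupied goal in the unlabeled case) or into an external buffer outside the workspace (unlimited capacity), in the latter case later moved from the buffer to such a goal pose; an object may be placed at a goal pose only if it overlaps no object currently in the workspace; at the end the goal requirement holds. Running buffers at a moment = number of objects stored in buffers; $\mathrm{MRB}$ = minimum over plans of the maximum number of running buffers. *)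

theory Defs
  imports "HOL-Analysis.Analysis"
begin

text \<open>Objects are indexed by 0..<n; start pose of object i is
  the disc centred at s i, goal poses are the discs centred at g k (k < n).
  (Rotations are irrelevant for disc footprints.)\<close>

type_synonym pt = "real ^ 2"

definition footprint :: "real \<Rightarrow> pt \<Rightarrow> pt set" where
  "footprint r x = cball x r"

definition overlap :: "real \<Rightarrow> pt \<Rightarrow> pt \<Rightarrow> bool" where
  "overlap r x y \<longleftrightarrow> interior (footprint r x) \<inter> interior (footprint r y) \<noteq> {}"

definition feasible :: "real \<Rightarrow> nat \<Rightarrow> (nat \<Rightarrow> pt) \<Rightarrow> bool" where
  "feasible r n p \<longleftrightarrow> (\<forall>i<n. \<forall>j<n. i \<noteq> j \<longrightarrow> \<not> overlap r (p i) (p j))"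

datatype loc = AtStart | InBuffer | AtGoal nat

datatype action = StartToGoal nat nat | StartToBuffer nat | BufferToGoal nat nat

fun apply_act :: "action \<Rightarrow> (nat \<Rightarrow> loc) \<Rightarrow> (nat \<Rightarrow> loc)" where
  "apply_act (StartToGoal i k) c = c(i := AtGoal k)"
| "apply_act (StartToBuffer i) c = c(i := InBuffer)"
| "apply_act (BufferToGoal i k) c = c(i := AtGoal k)"

definition can_place :: "bool \<Rightarrow> real \<Rightarrow> nat \<Rightarrow> (nat \<Rightarrow> pt) \<Rightarrow> (nat \<Rightarrow> pt)
    \<Rightarrow> (nat \<Rightarrow> loc) \<Rightarrow> nat \<Rightarrow> nat \<Rightarrow> bool" where
  "can_place lab r n s g c i k \<longleftrightarrow>
     k < n \<and> (lab \<longrightarrow> k = i) \<and>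
     (\<forall>j<n. c j \<noteq> AtGoal k) \<and>
     (\<forall>j<n. j \<noteq> i \<longrightarrow>
        (c j = AtStart \<longrightarrow> \<not> overlap r (g k) (s j)) \<and>
        (\<forall>k'. c j = AtGoal k' \<longrightarrow> \<not> overlap r (g k) (g k')))"

fun act_ok :: "bool \<Rightarrow> real \<Rightarrow> nat \<Rightarrow> (nat \<Rightarrow> pt) \<Rightarrow> (nat \<Rightarrow> pt)
    \<Rightarrow> (nat \<Rightarrow> loc) \<Rightarrow> action \<Rightarrow> bool" where
  "act_ok lab r n s g c (StartToGoal i k) \<longleftrightarrow>
     i < n \<and> c i = AtStart \<and> can_place lab r n s g c i k"
| "act_ok lab r n s g c (StartToBuffer i) \<longleftrightarrow> i < n \<and> c i = AtStart"
| "act_ok lab r n s g c (BufferToGoal i k) \<longleftrightarrow>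
     i < n \<and> c i = InBuffer \<and> can_place lab r n s g c i k"

definition goal_reached :: "nat \<Rightarrow> (nat \<Rightarrow> loc) \<Rightarrow> bool" where
  "goal_reached n c \<longleftrightarrow> (\<forall>i<n. \<exists>k. c i = AtGoal k) \<and> (\<forall>k<n. \<exists>i<n. c i = AtGoal k)"

fun valid_from :: "bool \<Rightarrow> real \<Rightarrow> nat \<Rightarrow> (nat \<Rightarrow> pt) \<Rightarrow> (nat \<Rightarrow> pt)
    \<Rightarrow> (nat \<Rightarrow> loc) \<Rightarrow> action list \<Rightarrow> bool" where
  "valid_from lab r n s g c [] = goal_reached n c"
| "valid_from lab r n s g c (a # as) =
     (act_ok lab r n s g c a \<and> valid_from lab r n s g (apply_act a c) as)"

definition nbuf :: "nat \<Rightarrow> (nat \<Rightarrow> loc) \<Rightarrow> nat" where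
  "nbuf n c = card {i. i < n \<and> c i = InBuffer}"

fun maxbuf :: "nat \<Rightarrow> (nat \<Rightarrow> loc) \<Rightarrow> action list \<Rightarrow> nat" where
  "maxbuf n c [] = nbuf n c"
| "maxbuf n c (a # as) = max (nbuf n c) (maxbuf n (apply_act a c) as)"

definition init_cfg :: "nat \<Rightarrow> loc" where
  "init_cfg = (\<lambda>_. AtStart)"

text \<open>MRB: minimum over valid plans of the maximum number of running buffers
  (lab = True: labeled, object i must go to goal g i; lab = False: unlabeled).\<close>
definition MRB :: "bool \<Rightarrow> real \<Rightarrow> nat \<Rightarrow> (nat \<Rightarrow> pt) \<Rightarrow> (nat \<Rightarrow> pt) \<Rightarrow> nat" where
  "MRB lab r n s g = Inf {maxbuf n init_cfg p | p. valid_from lab r n s g init_cfg p}"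

end

theory Submission
  imports Defs
begin


lemma overlap_iff: assumes "r > 0" shows "overlap r x y \<longleftrightarrow> dist x y < 2*r"
proof
  assume "overlap r x y"
  then obtain z where "z \<in> ball x r" "z \<in> ball y r"
    unfolding overlap_def footprint_def interior_cball by blast
  then have "dist x z < r" "dist z y < r" by (auto simp: dist_commute)
  then show "dist x y < 2*r" using dist_triangle[of x y z] by linarith
next
  assume a: "dist x y < 2*r"
  have "midpoint x y \<in> ball x r" "midpoint x y \<in> ball y r"
    using a by (auto simp: dist_midpoint)
  then show "overlap r x y" unfolding overlap_def footprint_def interior_cball by blast
qed

definition pos :: "int \<Rightarrow> int \<Rightarrow> pt" where
  "pos a b = vector [4 * real_of_int a, 7 * real_of_int b]"

lemma dist_pos: "dist (pos a b) (pos a' b') = sqrt (of_int (16*(a-a')^2 + 49*(b-b')^2))"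
  unfolding pos_def dist_vec_def L2_set_def sum_2
  by (simp add: dist_real_def power2_eq_square algebra_simps)

lemma ov_pos: "overlap 4 (pos a b) (pos a' b') \<longleftrightarrow> 16*(a-a')^2 + 49*(b-b')^2 < (64::int)"
proof -
  have "overlap 4 (pos a b) (pos a' b') \<longleftrightarrow> sqrt (of_int (16*(a-a')^2 + 49*(b-b')^2)) < sqrt 64"
    by (simp add: overlap_iff dist_pos)
  also have "\<dots> \<longleftrightarrow> 16*(a-a')^2 + 49*(b-b')^2 < (64::int)"
    by (subst real_sqrt_less_iff) linarith
  finally show ?thesis .
qed



definition tI :: "nat \<Rightarrow> nat" where "tI i = i mod 2"
definition pI :: "nat \<Rightarrow> nat \<Rightarrow> nat" where "pI m i = (i div 2) mod m"
definition qI :: "nat \<Rightarrow> nat \<Rightarrow> nat" where "qI m i = (i div 2) div m"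

definition sS :: "nat \<Rightarrow> nat \<Rightarrow> pt" where
  "sS m i = pos (2*int (pI m i) + int (tI i)) (2*int (qI m i) + int (tI i))"
definition gG :: "nat \<Rightarrow> nat \<Rightarrow> pt" where
  "gG m i = pos (2*int (pI m i) + 1 - int (tI i)) (2*int (qI m i) + int (tI i))"

definition idx :: "nat \<Rightarrow> nat \<Rightarrow> nat \<Rightarrow> nat \<Rightarrow> nat" where
  "idx m p q t = 2*(p+m*q)+t"

lemma decode [simp]:
  assumes "p < m" "t < 2"
  shows "pI m (idx m p q t) = p" "qI m (idx m p q t) = q" "tI (idx m p q t) = t"
proof -
  have h: "(2*(p+m*q)+t) div 2 = p+m*q" using assms(2) by simp
  show "pI m (idx m p q t) = p" "qI m (idx m p q t) = q" using assms(1)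
    unfolding idx_def pI_def qI_def h by auto
  show "tI (idx m p q t) = t" using assms(2) unfolding tI_def idx_def by presburger
qed

lemma sq_ge1: "(x::int) \<noteq> 0 \<Longrightarrow> x^2 \<ge> 1"
  by (metis abs_ge_self abs_square_eq_1 linorder_not_le one_le_power power2_abs zero_less_abs_iff
      int_one_le_iff_zero_less le_less)

lemma sq_ge4: "(x::int) \<noteq> 0 \<Longrightarrow> even x \<Longrightarrow> x^2 \<ge> 4"
proof -
  assume "x \<noteq> 0" "even x"
  then obtain y where "x = 2*y" "y \<noteq> 0" by auto
  then have "x^2 = 4*y^2" by (simp add: power2_eq_square)
  with sq_ge1[OF \<open>y \<noteq> 0\<close>] show ?thesis by simp
qed

lemma sep_arith:
  fixes da db :: int
  assumes "even (da + db)" "\<not> (da = 0 \<and> db = 0)"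
  shows "\<not> 16*da^2 + 49*db^2 < 64"
proof (cases "db = 0")
  case True
  then have "da \<noteq> 0" "even da" using assms by auto
  then have "da^2 \<ge> 4" by (rule sq_ge4)
  then show ?thesis using True by simp
next
  case False
  show ?thesis
  proof (cases "da = 0")
    case True
    then have "db^2 \<ge> 4" using assms False by (intro sq_ge4) auto
    then show ?thesis using True by simp
  next
    case F2: False
    have "da^2 \<ge> 1" "db^2 \<ge> 1" using sq_ge1 F2 False by auto
    then show ?thesis by simp
  qed
qed

lemma decode_inj:
  assumes "m > 0" "pI m i = pI m j" "qI m i = qI m j" "tI i = tI j"
  shows "i = j"
proof -
  have "i div 2 = j div 2" using assms unfolding pI_def qI_def
    by (metis div_mult_mod_eq)
  then show ?thesis using assms(4) unfolding tI_def by (metis div_mult_mod_eq)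
qed

lemma tI_lt: "tI i < 2" by (simp add: tI_def)

lemma feas_s: assumes "m > 0" "i \<noteq> j" shows "\<not> overlap 4 (sS m i) (sS m j)"
proof -
  let ?da = "(2*int (pI m i) + int (tI i)) - (2*int (pI m j) + int (tI j))"
  let ?db = "(2*int (qI m i) + int (tI i)) - (2*int (qI m j) + int (tI j))"
  have ev: "even (?da + ?db)" by simp
  have nz: "\<not> (?da = 0 \<and> ?db = 0)"
  proof
    assume h: "?da = 0 \<and> ?db = 0"
    have "tI i = tI j" using h tI_lt[of i] tI_lt[of j] by presburger
    then have "pI m i = pI m j" "qI m i = qI m j" using h by auto
    then show False using decode_inj assms \<open>tI i = tI j\<close> by blast
  qed
  show ?thesis unfolding sS_def ov_pos using sep_arith[OF ev nz] .
qed

lemma feas_g: assumes "m > 0" "i \<noteq> j" shows "\<not> overlap 4 (gG m i) (gG m j)"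
proof -
  let ?da = "(2*int (pI m i) + 1 - int (tI i)) - (2*int (pI m j) + 1 - int (tI j))"
  let ?db = "(2*int (qI m i) + int (tI i)) - (2*int (qI m j) + int (tI j))"
  have ev: "even (?da + ?db)" by simp
  have nz: "\<not> (?da = 0 \<and> ?db = 0)"
  proof
    assume h: "?da = 0 \<and> ?db = 0"
    have "tI i = tI j" using h tI_lt[of i] tI_lt[of j] by presburger
    then have "pI m i = pI m j" "qI m i = qI m j" using h by auto
    then show False using decode_inj assms \<open>tI i = tI j\<close> by blast
  qed
  show ?thesis unfolding gG_def ov_pos using sep_arith[OF ev nz] .
qed

lemma ov_within:
  assumes "p < m" "t < 2" "t' < 2"
  shows "overlap 4 (gG m (idx m p q t)) (sS m (idx m p q t'))"
  using assms unfolding gG_def sS_def ov_pos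
  by (cases t; cases t') auto

lemma ov_right:
  assumes "p + 1 < m"
  shows "overlap 4 (gG m (idx m (p+1) q 1)) (sS m (idx m p q 1))"
  using assms unfolding gG_def sS_def ov_pos by simp

lemma ov_left:
  assumes "p < m" "0 < p"
  shows "overlap 4 (gG m (idx m (p-1) q 0)) (sS m (idx m p q 0))"
  using assms unfolding gG_def sS_def ov_pos by simp

lemma ov_up:
  assumes "p < m"
  shows "overlap 4 (gG m (idx m p (q+1) 0)) (sS m (idx m p q 1))"
  using assms unfolding gG_def sS_def ov_pos by simp

lemma ov_down:
  assumes "p < m" "0 < q"
  shows "overlap 4 (gG m (idx m p (q-1) 1)) (sS m (idx m p q 0))"
  using assms unfolding gG_def sS_def ov_pos by simp



definition filled :: "nat \<Rightarrow> (nat \<Rightarrow> loc) \<Rightarrow> nat set" where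
  "filled n c = {k. k < n \<and> (\<exists>i<n. c i = AtGoal k)}"

definition Nb :: "real \<Rightarrow> nat \<Rightarrow> (nat \<Rightarrow> pt) \<Rightarrow> (nat \<Rightarrow> pt) \<Rightarrow> nat set \<Rightarrow> nat set" where
  "Nb r n s g K = {j. j < n \<and> (\<exists>k\<in>K. overlap r (g k) (s j))}"

definition Inv :: "real \<Rightarrow> nat \<Rightarrow> (nat \<Rightarrow> pt) \<Rightarrow> (nat \<Rightarrow> pt) \<Rightarrow> (nat \<Rightarrow> loc) \<Rightarrow> bool" where
  "Inv r n s g c \<longleftrightarrow> (\<forall>i<n. \<forall>k. c i = AtGoal k \<longrightarrow> k < n) \<and>
     (\<forall>i<n. \<forall>j<n. \<forall>k. c i = AtGoal k \<and> c j = AtGoal k \<longrightarrow> i = j) \<and>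
     (\<forall>k\<in>filled n c. \<forall>j<n. overlap r (g k) (s j) \<longrightarrow> c j \<noteq> AtStart)"

lemma inv_init: "Inv r n s g init_cfg"
  by (simp add: Inv_def init_cfg_def filled_def)

lemma inv_place:
  assumes inv: "Inv r n s g c" and i: "i < n" and ni: "\<forall>k'. c i \<noteq> AtGoal k'"
    and cp: "can_place lab r n s g c i k"
  shows "Inv r n s g (c(i := AtGoal k))"
proof -
  have k: "k < n" and free: "\<forall>j<n. c j \<noteq> AtGoal k"
    and nov: "\<forall>j<n. j \<noteq> i \<longrightarrow> c j = AtStart \<longrightarrow> \<not> overlap r (g k) (s j)"
    using cp unfolding can_place_def by auto
  have I1: "\<forall>i<n. \<forall>k. c i = AtGoal k \<longrightarrow> k < n"
    and I2: "\<forall>i<n. \<forall>j<n. \<forall>k. c i = AtGoal k \<and> c j = AtGoal k \<longrightarrow> i = j"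
    and I3: "\<forall>k\<in>filled n c. \<forall>j<n. overlap r (g k) (s j) \<longrightarrow> c j \<noteq> AtStart"
    using inv unfolding Inv_def by blast+
  let ?c = "c(i := AtGoal k)"
  have J1: "\<forall>i'<n. \<forall>k'. ?c i' = AtGoal k' \<longrightarrow> k' < n" using I1 k by auto
  have J2: "\<forall>i1<n. \<forall>i2<n. \<forall>k'. ?c i1 = AtGoal k' \<and> ?c i2 = AtGoal k' \<longrightarrow> i1 = i2"
    using I2 free by (metis fun_upd_apply)
  have J3: "\<forall>k'\<in>filled n ?c. \<forall>j<n. overlap r (g k') (s j) \<longrightarrow> ?c j \<noteq> AtStart"
  proof (intro ballI allI impI)
    fix k' j assume kf: "k' \<in> filled n ?c" and j: "j < n" and ov: "overlap r (g k') (s j)"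
    show "?c j \<noteq> AtStart"
    proof (cases "j = i")
      case True then show ?thesis by simp
    next
      case False
      from kf obtain i' where i': "i' < n" "?c i' = AtGoal k'" "k' < n" unfolding filled_def by auto
      show ?thesis
      proof (cases "i' = i")
        case True
        then have "k' = k" using i' by simp
        then show ?thesis using nov j False ov by auto
      next
        case F2: False
        then have "k' \<in> filled n c" using i' unfolding filled_def by auto
        then show ?thesis using I3 j ov False by auto
      qed
    qed
  qed
  show ?thesis unfolding Inv_def by (intro conjI J1 J2 J3)
qed

lemma inv_buf:
  assumes inv: "Inv r n s g c" and ci: "c i = AtStart"
  shows "Inv r n s g (c(i := InBuffer))"
proof -
  have I1: "\<forall>i<n. \<forall>k. c i = AtGoal k \<longrightarrow> k < n"
    and I2: "\<forall>i<n. \<forall>j<n. \<forall>k. c i = AtGoal k \<and> c j = AtGoal k \<longrightarrow> i = j"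
    and I3: "\<forall>k\<in>filled n c. \<forall>j<n. overlap r (g k) (s j) \<longrightarrow> c j \<noteq> AtStart"
    using inv unfolding Inv_def by blast+
  let ?c = "c(i := InBuffer)"
  have F: "filled n ?c \<subseteq> filled n c"
    unfolding filled_def by (auto split: if_splits)
  have J1: "\<forall>i'<n. \<forall>k'. ?c i' = AtGoal k' \<longrightarrow> k' < n" using I1 by simp
  have J2: "\<forall>i1<n. \<forall>i2<n. \<forall>k'. ?c i1 = AtGoal k' \<and> ?c i2 = AtGoal k' \<longrightarrow> i1 = i2"
    using I2 by simp
  have J3: "\<forall>k'\<in>filled n ?c. \<forall>j<n. overlap r (g k') (s j) \<longrightarrow> ?c j \<noteq> AtStart"
  proof (intro ballI allI impI)
    fix k' j assume "k' \<in> filled n ?c" "j < n" "overlap r (g k') (s j)"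
    then show "?c j \<noteq> AtStart" using I3 F by (cases "j = i") auto
  qed
  show ?thesis unfolding Inv_def by (intro conjI J1 J2 J3)
qed

lemma inv_step:
  assumes inv: "Inv r n s g c" and ok: "act_ok lab r n s g c a"
  shows "Inv r n s g (apply_act a c)"
proof (cases a)
  case (StartToGoal i k)
  then have "i < n" "c i = AtStart" "can_place lab r n s g c i k" using ok by auto
  then show ?thesis using StartToGoal inv_place[OF inv, of i lab k] by simp
next
  case (StartToBuffer i)
  then have "c i = AtStart" using ok by auto
  then show ?thesis using StartToBuffer inv_buf[OF inv] by simp
next
  case (BufferToGoal i k)
  then have "i < n" "c i = InBuffer" "can_place lab r n s g c i k" using ok by auto
  then show ?thesis using BufferToGoal inv_place[OF inv, of i lab k] by simp
qed

lemma filled_upd_goal: "filled n (c(i := AtGoal k)) \<subseteq> insert k (filled n c)"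
  unfolding filled_def by auto

lemma filled_upd_buf: "filled n (c(i := InBuffer)) \<subseteq> filled n c"
  unfolding filled_def by auto

lemma filled_step:
  shows "card (filled n (apply_act a c)) \<le> card (filled n c) + 1"
proof -
  have fin: "finite (filled n c)" unfolding filled_def by auto
  have "\<exists>k. filled n (apply_act a c) \<subseteq> insert k (filled n c)"
  proof (cases a)
    case (StartToBuffer i)
    then show ?thesis using filled_upd_buf[of n c i] by auto
  next
    case (StartToGoal i k)
    then show ?thesis using filled_upd_goal[of n c i k] by auto
  next
    case (BufferToGoal i k)
    then show ?thesis using filled_upd_goal[of n c i k] by auto
  qed
  then obtain k where "filled n (apply_act a c) \<subseteq> insert k (filled n c)" by blast
  then have "card (filled n (apply_act a c)) \<le> card (insert k (filled n c))"
    using fin by (intro card_mono) auto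
  also have "\<dots> \<le> card (filled n c) + 1" using fin by (simp add: card_insert_if)
  finally show ?thesis .
qed

lemma nbuf_bound:
  assumes inv: "Inv r n s g c"
  shows "card (Nb r n s g (filled n c)) \<le> nbuf n c + card (filled n c)"
proof -
  have I1: "\<forall>i<n. \<forall>k. c i = AtGoal k \<longrightarrow> k < n"
    and I2: "\<forall>i<n. \<forall>j<n. \<forall>k. c i = AtGoal k \<and> c j = AtGoal k \<longrightarrow> i = j"
    and I3: "\<forall>k\<in>filled n c. \<forall>j<n. overlap r (g k) (s j) \<longrightarrow> c j \<noteq> AtStart"
    using inv unfolding Inv_def by blast+
  define B where "B = {i. i < n \<and> c i = InBuffer}"
  define Og where "Og = {i. i < n \<and> (\<exists>k. c i = AtGoal k)}"
  define f where "f i = (case c i of AtGoal k \<Rightarrow> k | _ \<Rightarrow> 0)" for i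
  have "Nb r n s g (filled n c) \<subseteq> B \<union> Og"
    unfolding Nb_def B_def Og_def using I3 by (auto, metis loc.exhaust)
  then have "card (Nb r n s g (filled n c)) \<le> card (B \<union> Og)"
    by (intro card_mono) (auto simp: B_def Og_def)
  also have "\<dots> \<le> card B + card Og" by (rule card_Un_le)
  also have "card Og = card (f ` Og)"
  proof (rule card_image[symmetric], rule inj_onI)
    fix x y assume "x \<in> Og" "y \<in> Og" "f x = f y"
    then show "x = y" using I2 unfolding Og_def f_def by auto
  qed
  also have "f ` Og = filled n c"
  proof
    show "f ` Og \<subseteq> filled n c" unfolding Og_def f_def filled_def using I1 by auto
    show "filled n c \<subseteq> f ` Og"
    proof
      fix k assume "k \<in> filled n c"
      then obtain i where "i < n" "c i = AtGoal k" unfolding filled_def by auto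
      then show "k \<in> f ` Og" unfolding Og_def f_def by (auto intro!: image_eqI[of _ _ i])
    qed
  qed
  finally show ?thesis unfolding nbuf_def B_def .
qed

lemma goal_filled: "goal_reached n c \<Longrightarrow> filled n c = {..<n}"
  unfolding goal_reached_def filled_def by auto

lemma main_ind:
  assumes exp: "\<forall>K. K \<subseteq> {..<n} \<and> card K = h \<longrightarrow> h + B \<le> card (Nb r n s g K)"
    and hn: "h \<le> n"
  shows "Inv r n s g c \<Longrightarrow> valid_from lab r n s g c p \<Longrightarrow> card (filled n c) \<le> h
    \<Longrightarrow> B \<le> maxbuf n c p"
proof (induction p arbitrary: c)
  case Nil
  then have "filled n c = {..<n}" using goal_filled by simp
  then have "card (filled n c) = h" using Nil hn by simp
  moreover have "filled n c \<subseteq> {..<n}" unfolding filled_def by auto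
  ultimately have "h + B \<le> card (Nb r n s g (filled n c))" using exp by blast
  then show ?case using nbuf_bound[OF Nil(1)] \<open>card (filled n c) = h\<close> by simp
next
  case (Cons a p)
  show ?case
  proof (cases "card (filled n c) = h")
    case True
    moreover have "filled n c \<subseteq> {..<n}" unfolding filled_def by auto
    ultimately have "h + B \<le> card (Nb r n s g (filled n c))" using exp by blast
    then have "B \<le> nbuf n c" using nbuf_bound[OF Cons(2)] True by simp
    then show ?thesis by simp
  next
    case False
    have ok: "act_ok lab r n s g c a" and v: "valid_from lab r n s g (apply_act a c) p"
      using Cons(3) by auto
    have "card (filled n (apply_act a c)) \<le> h"
      using filled_step[of n a c] False Cons(4) by simp
    then have "B \<le> maxbuf n (apply_act a c) p"
      using Cons.IH[OF inv_step[OF Cons(2) ok] v] by simp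
    then show ?thesis by simp
  qed
qed

lemma MRB_lb:
  assumes exp: "\<forall>K. K \<subseteq> {..<n} \<and> card K = h \<longrightarrow> h + B \<le> card (Nb r n s g K)"
    and hn: "h \<le> n" and ex: "\<exists>p. valid_from lab r n s g init_cfg p"
  shows "B \<le> MRB lab r n s g"
  unfolding MRB_def
proof (rule cInf_greatest)
  show "{maxbuf n init_cfg p |p. valid_from lab r n s g init_cfg p} \<noteq> {}" using ex by auto
next
  fix x assume "x \<in> {maxbuf n init_cfg p |p. valid_from lab r n s g init_cfg p}"
  then obtain p where "x = maxbuf n init_cfg p" "valid_from lab r n s g init_cfg p" by auto
  then show "B \<le> x" using main_ind[OF exp hn inv_init] by (simp add: init_cfg_def filled_def)
qed



definition cfg1 :: "nat \<Rightarrow> nat \<Rightarrow> loc" where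
  "cfg1 k = (\<lambda>i. if i < k then InBuffer else AtStart)"
definition cfg2 :: "nat \<Rightarrow> nat \<Rightarrow> nat \<Rightarrow> loc" where
  "cfg2 n k = (\<lambda>i. if i < k then AtGoal i else if i < n then InBuffer else AtStart)"

lemma stage2:
  assumes feas: "feasible r n g"
  shows "n - k = d \<Longrightarrow> k \<le> n \<Longrightarrow>
    valid_from lab r n s g (cfg2 n k) (map (\<lambda>i. BufferToGoal i i) [k..<n])"
proof (induction d arbitrary: k)
  case 0
  then have "k = n" by simp
  then show ?case by (auto simp: goal_reached_def cfg2_def)
next
  case (Suc d)
  then have kn: "k < n" by simp
  have up: "[k..<n] = k # [Suc k..<n]" using kn by (simp add: upt_conv_Cons)
  have ok: "act_ok lab r n s g (cfg2 n k) (BufferToGoal k k)"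
    using kn feas by (auto simp: can_place_def cfg2_def feasible_def)
  have ap: "apply_act (BufferToGoal k k) (cfg2 n k) = cfg2 n (Suc k)"
    by (auto simp: cfg2_def fun_eq_iff)
  have "valid_from lab r n s g (cfg2 n (Suc k)) (map (\<lambda>i. BufferToGoal i i) [Suc k..<n])"
    using Suc.IH[of "Suc k"] Suc.prems kn by simp
  then show ?case using ok ap up by simp
qed

lemma stage1:
  shows "n - k = d \<Longrightarrow> k \<le> n \<Longrightarrow>
    valid_from lab r n s g (cfg1 k) (map StartToBuffer [k..<n] @ rest) =
    valid_from lab r n s g (cfg1 n) rest"
proof (induction d arbitrary: k)
  case 0
  then have "k = n" by simp
  then show ?case by simp
next
  case (Suc d)
  then have kn: "k < n" by simp
  have up: "[k..<n] = k # [Suc k..<n]" using kn by (simp add: upt_conv_Cons)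
  have ok: "act_ok lab r n s g (cfg1 k) (StartToBuffer k)"
    using kn unfolding cfg1_def by auto
  have ap: "apply_act (StartToBuffer k) (cfg1 k) = cfg1 (Suc k)"
    by (auto simp: cfg1_def fun_eq_iff)
  show ?case using Suc.IH[of "Suc k"] Suc.prems kn ok ap up by simp
qed

lemma plan_exists:
  assumes feas: "feasible r n g"
  shows "\<exists>p. valid_from lab r n s g init_cfg p"
proof -
  have "cfg1 0 = init_cfg" by (simp add: cfg1_def init_cfg_def fun_eq_iff)
  moreover have "cfg1 n = cfg2 n 0" by (simp add: cfg1_def cfg2_def fun_eq_iff)
  moreover have "valid_from lab r n s g (cfg2 n 0) (map (\<lambda>i. BufferToGoal i i) [0..<n])"
    using stage2[OF feas] by simp
  ultimately have "valid_from lab r n s g init_cfg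
      (map StartToBuffer [0..<n] @ map (\<lambda>i. BufferToGoal i i) [0..<n])"
    using stage1[of n 0 n lab r s g] by simp
  then show ?thesis by blast
qed



lemma chunk_card:
  fixes A :: "nat set"
  shows "card (A \<inter> {a..<a+L*N}) = (\<Sum>q<N. card (A \<inter> {a+L*q..<a+L*q+L}))"
proof (induction N)
  case 0 then show ?case by simp
next
  case (Suc N)
  have e: "a+L*Suc N = a+L*N+L" by simp
  have "{a..<a+L*Suc N} = {a..<a+L*N+L}" by (simp only: e)
  also have "\<dots> = {a..<a+L*N} \<union> {a+L*N..<a+L*N+L}"
    by (rule ivl_disj_un_two(3)[symmetric]) simp_all
  finally have "{a..<a+L*Suc N} = {a..<a+L*N} \<union> {a+L*N..<a+L*N+L}" .
  then have eq: "A \<inter> {a..<a+L*Suc N} = (A \<inter> {a..<a+L*N}) \<union> (A \<inter> {a+L*N..<a+L*N+L})"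
    by (simp only: Int_Un_distrib)
  have "card (A \<inter> {a..<a+L*Suc N}) = card ((A \<inter> {a..<a+L*N}) \<union> (A \<inter> {a+L*N..<a+L*N+L}))"
    by (simp only: eq)
  also have "\<dots> = card (A \<inter> {a..<a+L*N}) + card (A \<inter> {a+L*N..<a+L*N+L})"
  proof (rule card_Un_disjoint)
    show "A \<inter> {a..<a + L * N} \<inter> (A \<inter> {a + L * N..<a + L * N + L}) = {}"
      using ivl_disj_int_two(3)[of a "a+L*N" "a+L*N+L"] by blast
  qed simp_all
  also have "\<dots> = (\<Sum>q<N. card (A \<inter> {a+L*q..<a+L*q+L})) + card (A \<inter> {a+L*N..<a+L*N+L})"
    by (simp only: Suc.IH)
  also have "\<dots> = (\<Sum>q<Suc N. card (A \<inter> {a+L*q..<a+L*q+L}))"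
    by (simp only: sum.lessThan_Suc)
  finally show ?case .
qed

lemma switch:
  fixes a b m :: nat
  assumes "P a" "\<not> P b" "a < m" "b < m"
  shows "\<exists>x. x + 1 < m \<and> P x \<noteq> P (x+1)"
proof (rule ccontr)
  assume "\<not> ?thesis"
  then have h: "\<And>x. x + 1 < m \<Longrightarrow> P x = P (x+1)" by blast
  have c: "x < m \<Longrightarrow> (P x \<longleftrightarrow> P 0)" for x
  proof (induction x)
    case 0 then show ?case by blast
  next
    case (Suc x)
    then have "x < m" by simp
    have "P x = P (x+1)" using h Suc.prems by simp
    then show ?case using Suc.IH[OF \<open>x < m\<close>] by simp
  qed
  have "P a \<longleftrightarrow> P 0" by (rule c) (rule assms(3))
  moreover have "P b \<longleftrightarrow> P 0" by (rule c) (rule assms(4))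
  ultimately show False using assms(1,2) by blast
qed

locale blocks =
  fixes m :: nat and R :: "nat \<Rightarrow> nat \<Rightarrow> bool"
  assumes mpos: "0 < m"
  and W: "\<And>p q t t'. p < m \<Longrightarrow> t < 2 \<Longrightarrow> t' < 2 \<Longrightarrow> R (idx m p q t) (idx m p q t')"
  and Hr: "\<And>p q. p + 1 < m \<Longrightarrow> R (idx m (p+1) q 1) (idx m p q 1)"
  and Hl: "\<And>p q. p < m \<Longrightarrow> 0 < p \<Longrightarrow> R (idx m (p-1) q 0) (idx m p q 0)"
  and Hu: "\<And>p q. p < m \<Longrightarrow> R (idx m p (q+1) 0) (idx m p q 1)"
  and Hd: "\<And>p q. p < m \<Longrightarrow> 0 < q \<Longrightarrow> R (idx m p (q-1) 1) (idx m p q 0)"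
begin

definition BI :: "nat \<Rightarrow> nat \<Rightarrow> nat set" where
  "BI p q = {idx m p q 0, idx m p q 1}"

definition NbR :: "nat set \<Rightarrow> nat set" where
  "NbR K = {j. j < 2*m*m \<and> (\<exists>k\<in>K. R k j)}"

definition full :: "nat set \<Rightarrow> nat \<Rightarrow> nat \<Rightarrow> bool" where
  "full K p q \<longleftrightarrow> BI p q \<subseteq> K"

definition emp :: "nat set \<Rightarrow> nat \<Rightarrow> nat \<Rightarrow> bool" where
  "emp K p q \<longleftrightarrow> K \<inter> BI p q = {}"

definition fnb :: "nat set \<Rightarrow> nat \<Rightarrow> nat \<Rightarrow> bool" where
  "fnb K p q \<longleftrightarrow> (p+1 < m \<and> full K (p+1) q) \<or> (0 < p \<and> full K (p-1) q) \<or>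
      (q+1 < m \<and> full K p (q+1)) \<or> (0 < q \<and> full K p (q-1))"

definition contrib :: "nat set \<Rightarrow> nat \<Rightarrow> nat \<Rightarrow> bool" where
  "contrib K p q \<longleftrightarrow> \<not> full K p q \<and> (\<not> emp K p q \<or> fnb K p q)"

lemma BI_eq: "BI p q = {2*m*q + 2*p ..< 2*m*q + 2*p + 2}"
  unfolding BI_def idx_def by (auto simp: algebra_simps)

lemma card_BI: "card (BI p q) = 2"
  unfolding BI_def idx_def by simp

lemma idx_lt: "p < m \<Longrightarrow> q < m \<Longrightarrow> t < 2 \<Longrightarrow> idx m p q t < 2*m*m"
proof -
  assume a: "p < m" "q < m" "t < 2"
  have "p + m*q + 1 \<le> m + m*q" using a by simp
  also have "\<dots> = m*(q+1)" by (simp add: algebra_simps)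
  also have "\<dots> \<le> m*m" using a by (intro mult_le_mono2) simp
  finally have "p + m*q + 1 \<le> m*m" .
  then show ?thesis unfolding idx_def using a by simp
qed

lemma BI_lt: "p < m \<Longrightarrow> q < m \<Longrightarrow> BI p q \<subseteq> {..<2*m*m}"
  unfolding BI_def using idx_lt by auto

lemma card_split:
  assumes "A \<subseteq> {..<2*m*m}"
  shows "card A = (\<Sum>q<m. \<Sum>p<m. card (A \<inter> BI p q))"
proof -
  have "card A = card (A \<inter> {0..<0+(2*m)*m})" using assms
    by (metis Int_absorb2 atLeast0LessThan add_0 mult.assoc)
  also have "\<dots> = (\<Sum>q<m. card (A \<inter> {0+(2*m)*q..<0+(2*m)*q+(2*m)}))" by (rule chunk_card)
  also have "\<dots> = (\<Sum>q<m. \<Sum>p<m. card (A \<inter> BI p q))"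
  proof (rule sum.cong[OF refl])
    fix q
    have "card (A \<inter> {0+(2*m)*q..<0+(2*m)*q+(2*m)}) = card (A \<inter> {2*m*q..<2*m*q+2*m})"
      by (simp add: algebra_simps)
    also have "\<dots> = (\<Sum>p<m. card (A \<inter> {2*m*q+2*p..<2*m*q+2*p+2}))"
      using chunk_card[of A "2*m*q" 2 m] by (simp add: algebra_simps)
    also have "\<dots> = (\<Sum>p<m. card (A \<inter> BI p q))" by (simp add: BI_eq)
    finally show "card (A \<inter> {0+(2*m)*q..<0+(2*m)*q+(2*m)}) = (\<Sum>p<m. card (A \<inter> BI p q))" .
  qed
  finally show ?thesis .
qed

lemma full_card: "full K p q \<longleftrightarrow> card (K \<inter> BI p q) = 2"
proof
  assume "full K p q" then have "K \<inter> BI p q = BI p q" unfolding full_def by auto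
  then show "card (K \<inter> BI p q) = 2" using card_BI by simp
next
  assume c: "card (K \<inter> BI p q) = 2"
  have f: "finite (BI p q)" by (simp add: BI_def)
  have "card (K \<inter> BI p q) = card (BI p q)" using c card_BI by simp
  then have "K \<inter> BI p q = BI p q"
    using card_subset_eq[OF f, of "K \<inter> BI p q"] by auto
  then show "full K p q" unfolding full_def by auto
qed

lemma card_le2: "card (K \<inter> BI p q) \<le> 2"
  using card_mono[of "BI p q" "K \<inter> BI p q"] card_BI by (auto simp: BI_def)

lemma emp_card: "emp K p q \<longleftrightarrow> card (K \<inter> BI p q) = 0"
  unfolding emp_def by (auto simp: BI_def)

lemma block_bound:
  assumes pq: "p < m" "q < m"
  shows "card (K \<inter> BI p q) + (if contrib K p q then 1 else 0) \<le> card (NbR K \<inter> BI p q)"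
proof -
  have fin: "finite (NbR K \<inter> BI p q)" by (simp add: BI_def)
  show ?thesis
  proof (cases "emp K p q")
    case False
    then obtain k where k: "k \<in> K" "k \<in> BI p q" unfolding emp_def by auto
    have "BI p q \<subseteq> NbR K"
    proof
      fix j assume j: "j \<in> BI p q"
      have "R k j" using k(2) j W[OF pq(1)] unfolding BI_def by auto
      then show "j \<in> NbR K" using j BI_lt[OF pq] k(1) unfolding NbR_def by auto
    qed
    then have e: "card (NbR K \<inter> BI p q) = 2" using card_BI by (simp add: Int_absorb1)
    show ?thesis
    proof (cases "contrib K p q")
      case True
      then have "\<not> full K p q" unfolding contrib_def by auto
      then have "card (K \<inter> BI p q) \<noteq> 2" using full_card by simp
      then show ?thesis using e card_le2[of K p q] True by simp
    next
      case False
      then show ?thesis using e card_le2[of K p q] by simp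
    qed
  next
    case True
    then have z: "card (K \<inter> BI p q) = 0" using emp_card by simp
    show ?thesis
    proof (cases "contrib K p q")
      case False then show ?thesis using z by simp
    next
      case c: True
      then have "fnb K p q" using True unfolding contrib_def by auto
      then have "\<exists>j. j \<in> NbR K \<inter> BI p q"
        unfolding fnb_def
      proof (elim disjE conjE)
        assume a: "p + 1 < m" "full K (p+1) q"
        have "idx m (p+1) q 1 \<in> K" using a unfolding full_def BI_def by auto
        moreover have "R (idx m (p+1) q 1) (idx m p q 1)" using Hr[OF a(1)] .
        moreover have "idx m p q 1 < 2*m*m" using idx_lt[OF pq, of 1] by simp
        ultimately have "idx m p q 1 \<in> NbR K \<inter> BI p q" unfolding NbR_def BI_def by blast
        then show ?thesis by blast
      next
        assume a: "0 < p" "full K (p-1) q"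
        have "idx m (p-1) q 0 \<in> K" using a unfolding full_def BI_def by auto
        moreover have "R (idx m (p-1) q 0) (idx m p q 0)" using Hl[OF pq(1) a(1)] .
        moreover have "idx m p q 0 < 2*m*m" using idx_lt[OF pq, of 0] by simp
        ultimately have "idx m p q 0 \<in> NbR K \<inter> BI p q" unfolding NbR_def BI_def by blast
        then show ?thesis by blast
      next
        assume a: "q + 1 < m" "full K p (q+1)"
        have "idx m p (q+1) 0 \<in> K" using a unfolding full_def BI_def by auto
        moreover have "R (idx m p (q+1) 0) (idx m p q 1)" using Hu[OF pq(1)] .
        moreover have "idx m p q 1 < 2*m*m" using idx_lt[OF pq, of 1] by simp
        ultimately have "idx m p q 1 \<in> NbR K \<inter> BI p q" unfolding NbR_def BI_def by blast
        then show ?thesis by blast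
      next
        assume a: "0 < q" "full K p (q-1)"
        have "idx m p (q-1) 1 \<in> K" using a unfolding full_def BI_def by auto
        moreover have "R (idx m p (q-1) 1) (idx m p q 0)" using Hd[OF pq(1) a(1)] .
        moreover have "idx m p q 0 < 2*m*m" using idx_lt[OF pq, of 0] by simp
        ultimately have "idx m p q 0 \<in> NbR K \<inter> BI p q" unfolding NbR_def BI_def by blast
        then show ?thesis by blast
      qed
      then have "NbR K \<inter> BI p q \<noteq> {}" by blast
      then have "card (NbR K \<inter> BI p q) > 0" using fin card_gt_0_iff by blast
      then have "card (NbR K \<inter> BI p q) \<ge> 1" by simp
      then show ?thesis using z c by simp
    qed
  qed
qed

lemma row_contrib:
  assumes q: "q < m" and nf: "\<not> (\<forall>p<m. full K p q)" and ne: "\<not> (\<forall>p<m. emp K p q)"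
  shows "\<exists>p<m. contrib K p q"
proof -
  obtain p0 where p0: "p0 < m" "\<not> full K p0 q" using nf by auto
  obtain p1 where p1: "p1 < m" "\<not> emp K p1 q" using ne by auto
  show ?thesis
  proof (cases "full K p1 q")
    case False
    then show ?thesis using p1 unfolding contrib_def by auto
  next
    case True
    obtain x where x: "x + 1 < m" "full K x q \<noteq> full K (x+1) q"
      using switch[of "\<lambda>p. full K p q", OF True p0(2) p1(1) p0(1)] by auto
    show ?thesis
    proof (cases "full K x q")
      case True
      then have "contrib K (x+1) q" using x True unfolding contrib_def fnb_def by auto
      then show ?thesis using x(1) by (intro exI[of _ "x+1"]) auto
    next
      case False
      then have "contrib K x q" using x False unfolding contrib_def fnb_def by auto
      then show ?thesis using x(1) by (intro exI[of _ x]) auto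
    qed
  qed
qed

lemma emp_not_full: "emp K p q \<Longrightarrow> \<not> full K p q"
  unfolding emp_def full_def BI_def by auto

lemma col_contrib:
  assumes p: "p < m" and qa: "qa < m" "\<forall>p<m. full K p qa" and qb: "qb < m" "\<forall>p<m. emp K p qb"
  shows "\<exists>q<m. contrib K p q"
proof -
  have a: "full K p qa" using qa p by auto
  have b: "\<not> full K p qb" using qb p emp_not_full by auto
  obtain x where x: "x + 1 < m" "full K p x \<noteq> full K p (x+1)"
    using switch[of "\<lambda>q. full K p q", OF a b qa(1) qb(1)] by auto
  show ?thesis
  proof (cases "full K p x")
    case True
    then have "contrib K p (x+1)" using x True unfolding contrib_def fnb_def by auto
    then show ?thesis using x(1) by (intro exI[of _ "x+1"]) auto
  next
    case False
    then have "contrib K p x" using x False unfolding contrib_def fnb_def by auto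
    then show ?thesis using x(1) by (intro exI[of _ x]) auto
  qed
qed


lemma sum_ge1:
  fixes f :: "nat \<Rightarrow> nat"
  assumes "i < m" "f i \<ge> 1"
  shows "1 \<le> (\<Sum>j<m. f j)"
proof -
  have "f i \<le> (\<Sum>j<m. f j)" by (rule member_le_sum) (use assms in auto)
  then show ?thesis using assms by simp
qed

lemma count_split:
  "(\<Sum>q<m. (if P q then 1 else 0)) + (\<Sum>q<m. (if \<not> P q then 1 else 0)) = (m::nat)"
proof -
  have "(\<Sum>q<m. (if P q then 1 else 0)) + (\<Sum>q<m. (if \<not> P q then 1 else 0)) =
      (\<Sum>q<m. (if P q then 1 else 0) + (if \<not> P q then 1 else (0::nat)))"
    by (simp only: sum.distrib)
  also have "\<dots> = (\<Sum>q<m. 1)" by (rule sum.cong) auto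
  finally show ?thesis by simp
qed

lemma surplus:
  assumes Ksub: "K \<subseteq> {..<2*m*m}" and Kc: "card K = m*m"
  shows "m*m + m div 2 \<le> card (NbR K)"
proof -
  define ind where "ind p q = (if contrib K p q then 1 else (0::nat))" for p q
  define T where "T = (\<Sum>q<m. \<Sum>p<m. ind p q)"
  have Nsub: "NbR K \<subseteq> {..<2*m*m}" unfolding NbR_def by auto
  have "card K + T = (\<Sum>q<m. \<Sum>p<m. card (K \<inter> BI p q)) + (\<Sum>q<m. \<Sum>p<m. ind p q)"
    using card_split[OF Ksub] T_def by simp
  also have "\<dots> = (\<Sum>q<m. \<Sum>p<m. card (K \<inter> BI p q) + ind p q)"
    by (simp add: sum.distrib)
  also have "\<dots> \<le> (\<Sum>q<m. \<Sum>p<m. card (NbR K \<inter> BI p q))"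
    using block_bound unfolding ind_def by (intro sum_mono) auto
  also have "\<dots> = card (NbR K)" using card_split[OF Nsub] by simp
  finally have main: "card K + T \<le> card (NbR K)" .
  define rf where "rf q \<longleftrightarrow> (\<forall>p<m. full K p q)" for q
  define re where "re q \<longleftrightarrow> (\<forall>p<m. emp K p q)" for q
  define NP where "NP = (\<Sum>q<m. (if \<not> rf q \<and> \<not> re q then 1 else (0::nat)))"
  define rs where "rs q = (\<Sum>p<m. card (K \<inter> BI p q))" for q
  have rsK: "(\<Sum>q<m. rs q) = m*m" using card_split[OF Ksub] Kc unfolding rs_def by simp
  have "m div 2 \<le> T"
  proof (cases "(\<exists>qa<m. rf qa) \<and> (\<exists>qb<m. re qb)")
    case True
    then obtain qa qb where q: "qa < m" "rf qa" "qb < m" "re qb" by blast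
    have "\<forall>p<m. 1 \<le> (\<Sum>q<m. ind p q)"
    proof (intro allI impI)
      fix p assume p: "p < m"
      obtain q where "q < m" "contrib K p q"
        using col_contrib[OF p q(1) _ q(3)] q(2,4) unfolding rf_def re_def by blast
      then show "1 \<le> (\<Sum>q<m. ind p q)" by (intro sum_ge1[of q]) (auto simp: ind_def)
    qed
    then have "(\<Sum>p<m. (1::nat)) \<le> (\<Sum>p<m. \<Sum>q<m. ind p q)" by (intro sum_mono) auto
    also have "\<dots> = T" unfolding T_def by (rule sum.swap)
    finally show ?thesis by simp
  next
    case False
    have "NP \<le> T" unfolding NP_def T_def
    proof (rule sum_mono)
      fix q assume q: "q \<in> {..<m}"
      show "(if \<not> rf q \<and> \<not> re q then 1 else 0) \<le> (\<Sum>p<m. ind p q)"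
      proof (cases "\<not> rf q \<and> \<not> re q")
        case True
        then obtain p where "p < m" "contrib K p q"
          using row_contrib[of q K] q unfolding rf_def re_def by auto
        then have "1 \<le> (\<Sum>p<m. ind p q)" by (intro sum_ge1[of p]) (auto simp: ind_def)
        then show ?thesis using True by simp
      next
        case False
        then show ?thesis by (simp only: if_not_P[OF False]) simp
      qed
    qed
    from False have "(\<forall>q<m. \<not> re q) \<or> (\<forall>q<m. \<not> rf q)" by blast
    then have "m div 2 \<le> NP"
    proof
      assume nre: "\<forall>q<m. \<not> re q"
      define F where "F = (\<Sum>q<m. (if rf q then 1 else (0::nat)))"
      have NPe: "NP = (\<Sum>q<m. (if \<not> rf q then 1 else (0::nat)))"
        unfolding NP_def using nre by (intro sum.cong) auto
      have FN: "F + NP = m" unfolding F_def NPe by (rule count_split)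
      have "(\<Sum>q<m. (if rf q then 2*m else 0)) \<le> (\<Sum>q<m. rs q)"
      proof (rule sum_mono)
        fix q assume "q \<in> {..<m}"
        show "(if rf q then 2*m else 0) \<le> rs q"
        proof (cases "rf q")
          case True
          then have "\<forall>p<m. card (K \<inter> BI p q) = 2" unfolding rf_def using full_card by auto
          then have "rs q = 2*m" unfolding rs_def by simp
          then show ?thesis by simp
        qed simp
      qed
      moreover have "(\<Sum>q<m. (if rf q then 2*m else 0)) = 2*m*F"
        unfolding F_def sum_distrib_left by (rule sum.cong) auto
      ultimately have "2*m*F \<le> m*m" using rsK by simp
      then have "m*(2*F) \<le> m*m" by (metis mult.assoc mult.commute)
      then have "2*F \<le> m" using mpos by simp
      then show ?thesis using FN by linarith
    next
      assume nrf: "\<forall>q<m. \<not> rf q"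
      have NPe: "NP = (\<Sum>q<m. (if \<not> re q then 1 else (0::nat)))"
        unfolding NP_def using nrf by (intro sum.cong) auto
      have "(\<Sum>q<m. rs q) \<le> (\<Sum>q<m. (if \<not> re q then 2*m else 0))"
      proof (rule sum_mono)
        fix q assume "q \<in> {..<m}"
        show "rs q \<le> (if \<not> re q then 2*m else 0)"
        proof (cases "re q")
          case True
          then have "\<forall>p<m. card (K \<inter> BI p q) = 0" unfolding re_def using emp_card by auto
          then have "rs q = 0" unfolding rs_def by simp
          then show ?thesis by simp
        next
          case False
          have "rs q \<le> (\<Sum>p<m. 2)" unfolding rs_def by (rule sum_mono) (rule card_le2)
          then show ?thesis using False by simp
        qed
      qed
      moreover have "(\<Sum>q<m. (if \<not> re q then 2*m else 0)) = 2*m*NP"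
        unfolding NPe sum_distrib_left by (rule sum.cong) auto
      ultimately have "m*m \<le> 2*m*NP" using rsK by simp
      then have "m*m \<le> m*(2*NP)" by (metis mult.assoc mult.commute)
      then have "m \<le> 2*NP" using mpos by simp
      then show ?thesis by linarith
    qed
    then show ?thesis using \<open>NP \<le> T\<close> by linarith
  qed
  then show ?thesis using main Kc by linarith
qed
end

lemma sqrt_bound:
  assumes m: "2 \<le> m"
  shows "(1/8) * sqrt (real (2*m*m)) \<le> real (m div 2)"
proof -
  have "real (2*m*m) \<le> (3/2 * real m)^2" by (simp add: power2_eq_square)
  then have "sqrt (real (2*m*m)) \<le> sqrt ((3/2 * real m)^2)" by (rule real_sqrt_le_mono)
  also have "\<dots> = 3/2 * real m" by simp
  finally have a: "sqrt (real (2*m*m)) \<le> 3/2 * real m" .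
  have "m \<le> 2*(m div 2) + 1" by linarith
  then have "real m \<le> 2 * real (m div 2) + 1" by linarith
  then show ?thesis using a m by linarith
qed

lemma Nb_comp:
  "Nb r n s (g \<circ> \<sigma>) K = Nb r n s g (\<sigma> ` K)"
  unfolding Nb_def by auto

theorem theorem3:
  shows "\<exists>c::real. c > 0 \<and>
    infinite {n::nat. \<exists>r::real. r > 0 \<and> (\<exists>s g :: nat \<Rightarrow> pt.
       (\<exists>W. bounded W \<and> (\<forall>i<n. footprint r (s i) \<subseteq> W \<and> footprint r (g i) \<subseteq> W)) \<and>
       feasible r n s \<and> feasible r n g \<and>
       real (MRB False r n s g) \<ge> c * sqrt (real n) \<and>
       (\<forall>\<sigma>. bij_betw \<sigma> {..<n} {..<n} \<longrightarrow>
          real (MRB True r n s (g \<circ> \<sigma>)) \<ge> c * sqrt (real n)))}"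
proof (intro exI conjI)
  show "(1/8::real) > 0" by simp
  let ?S = "{n::nat. \<exists>r::real. r > 0 \<and> (\<exists>s g :: nat \<Rightarrow> pt.
       (\<exists>W. bounded W \<and> (\<forall>i<n. footprint r (s i) \<subseteq> W \<and> footprint r (g i) \<subseteq> W)) \<and>
       feasible r n s \<and> feasible r n g \<and>
       real (MRB False r n s g) \<ge> 1/8 * sqrt (real n) \<and>
       (\<forall>\<sigma>. bij_betw \<sigma> {..<n} {..<n} \<longrightarrow>
          real (MRB True r n s (g \<circ> \<sigma>)) \<ge> 1/8 * sqrt (real n)))}"
  define f where "f m = 2*(m+2)*(m+2)" for m :: nat
  have mem: "f m \<in> ?S" for m
  proof -
    define M where "M = m + 2"
    have M2: "2 \<le> M" and Mpos: "0 < M" unfolding M_def by auto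
    define n where "n = 2*M*M"
    have fn: "f m = n" unfolding f_def n_def M_def by simp
    interpret B: blocks M "\<lambda>k j. overlap 4 (gG M k) (sS M j)"
      by unfold_locales (fact Mpos, (rule ov_within; assumption), (rule ov_right; assumption),
        (rule ov_left; assumption), (rule ov_up; assumption), (rule ov_down; assumption))
    have NbR_eq: "B.NbR K = Nb 4 n (sS M) (gG M) K" for K
      unfolding B.NbR_def Nb_def n_def by simp
    have feas_s': "feasible 4 n (sS M)" unfolding feasible_def using feas_s[OF Mpos] by blast
    have feas_g': "feasible 4 n (gG M)" unfolding feasible_def using feas_g[OF Mpos] by blast
    have expand: "\<forall>K. K \<subseteq> {..<n} \<and> card K = M*M \<longrightarrow> M*M + M div 2 \<le> card (Nb 4 n (sS M) (gG M) K)"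
      using B.surplus unfolding NbR_eq n_def by blast
    have hn: "M*M \<le> n" unfolding n_def by simp
    have bnd: "1/8 * sqrt (real n) \<le> real (M div 2)" unfolding n_def by (rule sqrt_bound[OF M2])
    have unl: "1/8 * sqrt (real n) \<le> real (MRB False 4 n (sS M) (gG M))"
    proof -
      have "M div 2 \<le> MRB False 4 n (sS M) (gG M)"
        by (rule MRB_lb[OF expand hn plan_exists[OF feas_g']])
      then show ?thesis using bnd by linarith
    qed
    have lab: "1/8 * sqrt (real n) \<le> real (MRB True 4 n (sS M) (gG M \<circ> \<sigma>))"
      if bij: "bij_betw \<sigma> {..<n} {..<n}" for \<sigma>
    proof -
      have inj: "inj_on \<sigma> {..<n}" and im: "\<sigma> ` {..<n} = {..<n}" using bij unfolding bij_betw_def by auto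
      have fg: "feasible 4 n (gG M \<circ> \<sigma>)"
        unfolding feasible_def
      proof (intro allI impI)
        fix i j assume "i < n" "j < n" "i \<noteq> j"
        then have "\<sigma> i \<noteq> \<sigma> j" using inj by (auto dest: inj_onD)
        then show "\<not> overlap 4 ((gG M \<circ> \<sigma>) i) ((gG M \<circ> \<sigma>) j)" using feas_g[OF Mpos] by simp
      qed
      have exp2: "\<forall>K. K \<subseteq> {..<n} \<and> card K = M*M \<longrightarrow> M*M + M div 2 \<le> card (Nb 4 n (sS M) (gG M \<circ> \<sigma>) K)"
      proof (intro allI impI)
        fix K assume K: "K \<subseteq> {..<n} \<and> card K = M*M"
        have "card (\<sigma> ` K) = card K" using K inj by (intro card_image) (auto intro: inj_on_subset)
        moreover have "\<sigma> ` K \<subseteq> {..<n}" using K im by auto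
        ultimately show "M*M + M div 2 \<le> card (Nb 4 n (sS M) (gG M \<circ> \<sigma>) K)"
          unfolding Nb_comp using expand K by auto
      qed
      have "M div 2 \<le> MRB True 4 n (sS M) (gG M \<circ> \<sigma>)"
        by (rule MRB_lb[OF exp2 hn plan_exists[OF fg]])
      then show ?thesis using bnd by linarith
    qed
    define WW where "WW = (\<Union>i\<in>{..<n}. footprint 4 (sS M i) \<union> footprint 4 (gG M i))"
    have Wb: "bounded WW" unfolding WW_def
      by (intro bounded_UN) (auto simp: footprint_def)
    have Ws: "\<forall>i<n. footprint 4 (sS M i) \<subseteq> WW \<and> footprint 4 (gG M i) \<subseteq> WW"
      unfolding WW_def by blast
    have "n \<in> ?S"
      unfolding mem_Collect_eq
      apply (rule exI[of _ "4::real"])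
      apply (rule conjI, simp)
      apply (rule exI[of _ "sS M"])
      apply (rule exI[of _ "gG M"])
      apply (intro conjI)
      apply (rule exI[of _ WW], rule conjI[OF Wb Ws])
      apply (rule feas_s')
      apply (rule feas_g')
      apply (rule unl)
      using lab apply blast
      done
    then show ?thesis unfolding fn .
  qed
  have "inj f"
  proof (rule strict_mono_imp_inj_on)
    show "strict_mono f" unfolding strict_mono_def f_def
    proof (intro allI impI)
      fix x y :: nat assume "x < y"
      then have "(x+2)*(x+2) < (y+2)*(y+2)" by (intro mult_strict_mono) auto
      then show "2 * (x + 2) * (x + 2) < 2 * (y + 2) * (y + 2)" by simp
    qed
  qed
  then have "infinite (range f)" by (simp add: range_inj_infinite)
  moreover have "range f \<subseteq> ?S" using mem by auto
  ultimately show "infinite ?S" using infinite_super by blast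
qed

end
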